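(* Let $I=\{x_1,\dots,x_n\}$ be a set of indices and $\prec$ a linear order on $I$. For any tensor $\phi$ with index set $I$, there exists a $\prec$-ordered normal TDD $\mathcal F$ such that $\Phi(\mathcal F)=\phi$.
   Context: Indices take values in $\{0,1\}$; a tensor over $I$ is a map $\{0,1\}^I\to\mathbb{C}$ (tensors over subsets of $I$ are regarded as tensors over $I$ not depending on the other indices). Each index $x$ is regarded as the tensor $x(c)=c$, and $\overline{x}(c):=1-c$; operations on tensors are pointwise. A TDD over $I$ is $\mathcal F=(V,E,index,value,low,high,w)$: a rooted directed acyclic graph with finite node set $V$ partitioned into non-terminal nodes $V_N$ and terminal nodes $V_T$, root $r_{\mathcal F}$; $index:V_N\to I$; $value:V_T\to\mathbb{C}$; $low,high:V_N\to V$; edges are the low-edges $(v,low(v))$ and high-edges $(v,high(v))$, $v\in V_N$, plus a unique source-less incoming edge $e_r$ of the root; $w$ gives each edge a complex weight and $w_{\mathcal F}:=w(e_r)$. Node tensors: $\Phi(v)=value(v)$ for terminal $v$; otherwise $\Phi(v)=w_0\overline{x_v}\Phi(low(v))+w_1x_v\Phi(high(v))$ with $x_v=index(v)$ and $w_0,w_1$ the low-/high-edge weights. The TDD represents $\Phi(\mathcal F):=w_{\mathcal F}\Phi(r_{\mathcal F})$. $\mathcal F$ is $\prec$-ordered if for every non-terminal node $v$, $index(v)\prec index(low(v))$ whenever $low(v)$ is non-terminal and $index(v)\prec index(high(v))$ whenever $high(v)$ is non-terminal. Normality (w.r.t. $\prec$): the pivot of a tensor $\phi$ is the lexicographically smallest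 (compare at the $\prec$-smallest differing index, $0<1$) $\vec a$ with $|\phi(\vec a)|=\max_{\vec b}|\phi(\vec b)|$; $\phi$ is normal if $\phi=0$ or $\phi$ equals $1$ at its pivot. A TDD is normal if $\Phi(v)$ is normal for every node $v$. *)

theory Defs
  imports Complex_Main
begin

text \<open>Index values 0/1 are modelled by False/True.\<close>

type_synonym 'i tensor = "('i \<Rightarrow> bool) \<Rightarrow> complex"

definition tensor_over :: "'i set \<Rightarrow> 'i tensor \<Rightarrow> bool" where
  "tensor_over I \<phi> \<longleftrightarrow> (\<forall>a b. (\<forall>i\<in>I. a i = b i) \<longrightarrow> \<phi> a = \<phi> b)"

text \<open>Canonical representatives of the elements of {0,1}^I.\<close>
definition assignments :: "'i set \<Rightarrow> ('i \<Rightarrow> bool) set" where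
  "assignments I = {a. \<forall>i. i \<notin> I \<longrightarrow> a i = False}"

definition lex_less :: "('i \<times> 'i) set \<Rightarrow> 'i set \<Rightarrow> ('i \<Rightarrow> bool) \<Rightarrow> ('i \<Rightarrow> bool) \<Rightarrow> bool" where
  "lex_less R I a b \<longleftrightarrow>
     (\<exists>i\<in>I. \<not> a i \<and> b i \<and> (\<forall>j\<in>I. (j, i) \<in> R \<longrightarrow> a j = b j))"

definition is_pivot :: "('i \<times> 'i) set \<Rightarrow> 'i set \<Rightarrow> 'i tensor \<Rightarrow> ('i \<Rightarrow> bool) \<Rightarrow> bool" where
  "is_pivot R I \<phi> p \<longleftrightarrow> p \<in> assignments I \<and>
     (\<forall>b\<in>assignments I. norm (\<phi> b) \<le> norm (\<phi> p)) \<and>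
     (\<forall>b\<in>assignments I. norm (\<phi> b) = norm (\<phi> p) \<longrightarrow> b = p \<or> lex_less R I p b)"

definition normal_tensor :: "('i \<times> 'i) set \<Rightarrow> 'i set \<Rightarrow> 'i tensor \<Rightarrow> bool" where
  "normal_tensor R I \<phi> \<longleftrightarrow> (\<forall>a\<in>assignments I. \<phi> a = 0) \<or>
     (\<exists>p. is_pivot R I \<phi> p \<and> \<phi> p = 1)"

text \<open>A TDD with node type 'v over index type 'i. Terminal nodes are
  nodes - nonterm. wlo v / whi v are the weights of the low/high edges of v,
  wroot is the weight of the incoming edge of the root.\<close>
record ('v, 'i) tdd =
  nodes :: "'v set"
  nonterm :: "'v set"
  root :: 'v
  idx :: "'v \<Rightarrow> 'i"
  val :: "'v \<Rightarrow> complex"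
  lo :: "'v \<Rightarrow> 'v"
  hi :: "'v \<Rightarrow> 'v"
  wlo :: "'v \<Rightarrow> complex"
  whi :: "'v \<Rightarrow> complex"
  wroot :: complex

definition tdd_edges :: "('v, 'i) tdd \<Rightarrow> ('v \<times> 'v) set" where
  "tdd_edges F = {(v, lo F v) | v. v \<in> nonterm F} \<union> {(v, hi F v) | v. v \<in> nonterm F}"

definition is_tdd :: "'i set \<Rightarrow> ('v, 'i) tdd \<Rightarrow> bool" where
  "is_tdd I F \<longleftrightarrow>
     finite (nodes F) \<and> nonterm F \<subseteq> nodes F \<and> root F \<in> nodes F \<and>
     (\<forall>v\<in>nonterm F. idx F v \<in> I \<and> lo F v \<in> nodes F \<and> hi F v \<in> nodes F) \<and>
     acyclic (tdd_edges F) \<and>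
     (\<forall>v\<in>nodes F. (root F, v) \<in> (tdd_edges F)\<^sup>*)"

inductive node_tensor_rel :: "('v, 'i) tdd \<Rightarrow> 'v \<Rightarrow> 'i tensor \<Rightarrow> bool" for F where
  term_node: "v \<in> nodes F \<Longrightarrow> v \<notin> nonterm F \<Longrightarrow> node_tensor_rel F v (\<lambda>_. val F v)"
| nonterm_node: "v \<in> nonterm F \<Longrightarrow> node_tensor_rel F (lo F v) t0 \<Longrightarrow> node_tensor_rel F (hi F v) t1 \<Longrightarrow>
    node_tensor_rel F v (\<lambda>a. (if a (idx F v) then 0 else 1) * wlo F v * t0 a
                             + (if a (idx F v) then 1 else 0) * whi F v * t1 a)"

definition node_tensor :: "('v, 'i) tdd \<Rightarrow> 'v \<Rightarrow> 'i tensor" where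
  "node_tensor F v = (THE t. node_tensor_rel F v t)"

definition tdd_tensor :: "('v, 'i) tdd \<Rightarrow> 'i tensor" where
  "tdd_tensor F = (\<lambda>a. wroot F * node_tensor F (root F) a)"

definition tdd_ordered :: "('i \<times> 'i) set \<Rightarrow> ('v, 'i) tdd \<Rightarrow> bool" where
  "tdd_ordered R F \<longleftrightarrow> (\<forall>v\<in>nonterm F.
     (lo F v \<in> nonterm F \<longrightarrow> (idx F v, idx F (lo F v)) \<in> R) \<and>
     (hi F v \<in> nonterm F \<longrightarrow> (idx F v, idx F (hi F v)) \<in> R))"

definition tdd_normal :: "('i \<times> 'i) set \<Rightarrow> 'i set \<Rightarrow> ('v, 'i) tdd \<Rightarrow> bool" where
  "tdd_normal R I F \<longleftrightarrow> (\<forall>v\<in>nodes F. normal_tensor R I (node_tensor F v))"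

end

theory Submission imports Defs begin

lemma lex_trans:
  assumes slo: "strict_linear_order_on I R"
    and ab: "lex_less R I a b" and bc: "lex_less R I b c"
  shows "lex_less R I a c"
proof -
  have tr: "trans R" and tot: "total_on I R" using slo unfolding strict_linear_order_on_def by auto
  obtain i where i: "i \<in> I" "\<not> a i" "b i" "\<forall>j\<in>I. (j, i) \<in> R \<longrightarrow> a j = b j"
    using ab unfolding lex_less_def by blast
  obtain j where j: "j \<in> I" "\<not> b j" "c j" "\<forall>k\<in>I. (k, j) \<in> R \<longrightarrow> b k = c k"
    using bc unfolding lex_less_def by blast
  have "i \<noteq> j" using i j by auto
  then have "(i, j) \<in> R \<or> (j, i) \<in> R" using tot i(1) j(1) unfolding total_on_def by blast
  then show ?thesis
  proof
    assume ij: "(i, j) \<in> R"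
    have "\<forall>k\<in>I. (k, i) \<in> R \<longrightarrow> a k = c k"
    proof (intro ballI impI)
      fix k assume "k \<in> I" "(k, i) \<in> R"
      moreover have "(k, j) \<in> R" using \<open>(k, i) \<in> R\<close> ij tr unfolding trans_def by blast
      ultimately show "a k = c k" using i(4) j(4) by simp
    qed
    moreover have "c i" using j(4) ij i by auto
    ultimately show ?thesis using i unfolding lex_less_def by blast
  next
    assume ji: "(j, i) \<in> R"
    have "\<forall>k\<in>I. (k, j) \<in> R \<longrightarrow> a k = c k"
    proof (intro ballI impI)
      fix k assume "k \<in> I" "(k, j) \<in> R"
      moreover have "(k, i) \<in> R" using \<open>(k, j) \<in> R\<close> ji tr unfolding trans_def by blast
      ultimately show "a k = c k" using i(4) j(4) by simp
    qed
    moreover have "\<not> a j" using i(4) ji j by auto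
    ultimately show ?thesis using j unfolding lex_less_def by blast
  qed
qed

lemma lex_total:
  assumes fin: "finite I" and slo: "strict_linear_order_on I R"
    and a: "a \<in> assignments I" and b: "b \<in> assignments I" and ne: "a \<noteq> b"
  shows "lex_less R I a b \<or> lex_less R I b a"
proof -
  have tr: "trans R" and irr: "irrefl R" using slo unfolding strict_linear_order_on_def by auto
  define D where "D = {i\<in>I. a i \<noteq> b i}"
  have "D \<noteq> {}"
  proof
    assume "D = {}"
    then have "\<forall>i. a i = b i" using a b unfolding D_def assignments_def by auto
    then show False using ne by auto
  qed
  have acR: "acyclic R" using tr irr unfolding acyclic_def irrefl_def by (simp add: trancl_id)
  have "finite (R \<inter> D \<times> D)" using fin unfolding D_def by auto
  moreover have "acyclic (R \<inter> D \<times> D)" using acR acyclic_subset by blast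
  ultimately have wf: "wf (R \<inter> D \<times> D)" by (rule finite_acyclic_wf)
  obtain m where m: "m \<in> D" "\<And>y. (y, m) \<in> R \<inter> D \<times> D \<Longrightarrow> y \<notin> D"
    using wfE_min[OF wf, of _ D] \<open>D \<noteq> {}\<close> by blast
  have agree: "\<forall>j\<in>I. (j, m) \<in> R \<longrightarrow> a j = b j"
    using m unfolding D_def by auto
  have "m \<in> I" "a m \<noteq> b m" using m(1) unfolding D_def by auto
  show ?thesis
  proof (cases "a m")
    case True
    then have "\<not> b m" using \<open>a m \<noteq> b m\<close> by simp
    then have "lex_less R I b a" unfolding lex_less_def using True agree \<open>m \<in> I\<close> by auto
    then show ?thesis ..
  next
    case False
    then have "b m" using \<open>a m \<noteq> b m\<close> by simp
    then have "lex_less R I a b" unfolding lex_less_def using False agree \<open>m \<in> I\<close> by auto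
    then show ?thesis ..
  qed
qed

lemma lex_min:
  assumes fin: "finite I" and slo: "strict_linear_order_on I R"
  shows "finite S \<Longrightarrow> S \<noteq> {} \<Longrightarrow> S \<subseteq> assignments I \<Longrightarrow> \<exists>p\<in>S. \<forall>b\<in>S. b = p \<or> lex_less R I p b"
proof (induction S rule: finite_ne_induct)
  case (singleton x) then show ?case by auto
next
  case (insert x S)
  then obtain p where p: "p \<in> S" "\<forall>b\<in>S. b = p \<or> lex_less R I p b" by auto
  show ?case
  proof (cases "x = p")
    case True then show ?thesis using p by auto
  next
    case False
    have xa: "x \<in> assignments I" "p \<in> assignments I" using insert p by auto
    from lex_total[OF fin slo xa False] show ?thesis
    proof
      assume "lex_less R I x p"
      have "\<forall>b\<in>insert x S. b = x \<or> lex_less R I x b"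
      proof
        fix b assume "b \<in> insert x S"
        then show "b = x \<or> lex_less R I x b"
        proof
          assume "b \<in> S"
          then have "b = p \<or> lex_less R I p b" using p(2) by blast
          then show ?thesis using \<open>lex_less R I x p\<close> lex_trans[OF slo] by metis
        qed simp
      qed
      then show ?thesis by blast
    next
      assume "lex_less R I p x"
      then show ?thesis using p by auto
    qed
  qed
qed

lemma finite_assignments: "finite I \<Longrightarrow> finite (assignments I)"
proof -
  assume "finite I"
  have "assignments I \<subseteq> (\<lambda>J i. i \<in> J) ` Pow I"
  proof
    fix a assume a: "a \<in> assignments I"
    have "a = (\<lambda>i. i \<in> {i\<in>I. a i})" using a unfolding assignments_def by auto
    then show "a \<in> (\<lambda>J i. i \<in> J) ` Pow I" by blast
  qed
  then show ?thesis using \<open>finite I\<close> finite_subset by blast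
qed

lemma pivot_exists:
  assumes fin: "finite I" and slo: "strict_linear_order_on I R"
  shows "\<exists>p. is_pivot R I \<chi> p"
proof -
  let ?S = "assignments I"
  have fS: "finite ?S" using fin by (rule finite_assignments)
  have neS: "?S \<noteq> {}" unfolding assignments_def by auto
  define m where "m = Max ((\<lambda>b. norm (\<chi> b)) ` ?S)"
  define T where "T = {b\<in>?S. norm (\<chi> b) = m}"
  have "m \<in> (\<lambda>b. norm (\<chi> b)) ` ?S" unfolding m_def using fS neS by (intro Max_in) auto
  then have "T \<noteq> {}" unfolding T_def by auto
  moreover have "finite T" using fS unfolding T_def by auto
  ultimately obtain p where p: "p \<in> T" "\<forall>b\<in>T. b = p \<or> lex_less R I p b"
    using lex_min[OF fin slo, of T] unfolding T_def by blast
  have "\<forall>b\<in>?S. norm (\<chi> b) \<le> m" unfolding m_def using fS by auto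
  then show ?thesis using p unfolding is_pivot_def T_def by auto
qed


definition piv :: "('i \<times> 'i) set \<Rightarrow> 'i set \<Rightarrow> 'i tensor \<Rightarrow> ('i \<Rightarrow> bool)" where
  "piv R I \<chi> = (SOME p. is_pivot R I \<chi> p)"
definition scl :: "('i \<times> 'i) set \<Rightarrow> 'i set \<Rightarrow> 'i tensor \<Rightarrow> complex" where
  "scl R I \<chi> = \<chi> (piv R I \<chi>)"
definition nf :: "('i \<times> 'i) set \<Rightarrow> 'i set \<Rightarrow> 'i tensor \<Rightarrow> 'i tensor" where
  "nf R I \<chi> = (\<lambda>a. \<chi> a / scl R I \<chi>)"
definition restr :: "'i tensor \<Rightarrow> 'i \<Rightarrow> bool \<Rightarrow> 'i tensor" where
  "restr \<chi> x b = (\<lambda>a. \<chi> (a(x := b)))"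

lemma piv_is_pivot:
  assumes "finite I" "strict_linear_order_on I R"
  shows "is_pivot R I \<chi> (piv R I \<chi>)"
  unfolding piv_def using pivot_exists[OF assms] by (rule someI_ex)

lemma nf_normal:
  assumes fin: "finite I" and slo: "strict_linear_order_on I R"
  shows "normal_tensor R I (nf R I \<chi>)"
proof (cases "scl R I \<chi> = 0")
  case True
  then show ?thesis unfolding normal_tensor_def nf_def by simp
next
  case False
  define p where "p = piv R I \<chi>"
  have pv: "is_pivot R I \<chi> p" unfolding p_def by (rule piv_is_pivot[OF fin slo])
  have c: "\<chi> p \<noteq> 0" using False unfolding scl_def p_def by simp
  have nfe: "nf R I \<chi> b = \<chi> b / \<chi> p" for b unfolding nf_def scl_def p_def by simp
  have nn: "norm (nf R I \<chi> b) = norm (\<chi> b) / norm (\<chi> p)" for b unfolding nfe by (simp add: norm_divide)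
  have np: "norm (\<chi> p) > 0" using c by simp
  have "is_pivot R I (nf R I \<chi>) p"
    using pv np unfolding is_pivot_def nn by (auto simp: divide_right_mono)
  moreover have "nf R I \<chi> p = 1" using c nfe by simp
  ultimately show ?thesis unfolding normal_tensor_def by blast
qed

lemma nf_decomp:
  assumes fin: "finite I" and slo: "strict_linear_order_on I R" and tov: "tensor_over I \<chi>"
  shows "scl R I \<chi> * nf R I \<chi> a = \<chi> a"
proof (cases "scl R I \<chi> = 0")
  case False then show ?thesis unfolding nf_def by simp
next
  case True
  define p where "p = piv R I \<chi>"
  have pv: "is_pivot R I \<chi> p" unfolding p_def by (rule piv_is_pivot[OF fin slo])
  define a' where "a' = (\<lambda>i. if i \<in> I then a i else False)"
  have "a' \<in> assignments I" unfolding a'_def assignments_def by auto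
  then have "norm (\<chi> a') \<le> norm (\<chi> p)" using pv unfolding is_pivot_def by blast
  moreover have "\<chi> p = 0" using True unfolding scl_def p_def by simp
  moreover have "\<chi> a = \<chi> a'" using tov unfolding tensor_over_def a'_def by auto
  ultimately show ?thesis using True by simp
qed

lemma tensor_over_nf: "tensor_over S \<chi> \<Longrightarrow> tensor_over S (nf R I \<chi>)"
  unfolding tensor_over_def nf_def by metis

lemma tensor_over_restr: fixes \<chi> :: "'i tensor" shows "tensor_over S \<chi> \<Longrightarrow> tensor_over (S - {x}) (restr \<chi> x bb)"
  unfolding tensor_over_def restr_def
proof (intro allI impI)
  fix a c :: "'i \<Rightarrow> bool" assume h: "\<forall>a b. (\<forall>i\<in>S. a i = b i) \<longrightarrow> \<chi> a = \<chi> b" "\<forall>i\<in>S - {x}. a i = c i"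
  have "\<forall>i\<in>S. (a(x := bb)) i = (c(x := bb)) i" using h(2) by auto
  then show "\<chi> (a(x := bb)) = \<chi> (c(x := bb))" using h(1) by blast
qed

lemma tensor_over_mono: "S \<subseteq> T \<Longrightarrow> tensor_over S \<chi> \<Longrightarrow> tensor_over T \<chi>"
  unfolding tensor_over_def by blast

lemma sorted_list_exists:
  assumes "finite I" "strict_linear_order_on I R"
  shows "\<exists>xs. set xs = I \<and> distinct xs \<and> sorted_wrt (\<lambda>x y. (x, y) \<in> R) xs"
  using assms
proof (induction I rule: finite_induct)
  case empty then show ?case by auto
next
  case (insert x F)
  have tr: "trans R" and irr: "irrefl R" and tot: "total_on (insert x F) R"
    using insert.prems unfolding strict_linear_order_on_def by auto
  have "strict_linear_order_on F R" using insert.prems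
    unfolding strict_linear_order_on_def total_on_def by blast
  then obtain xs where xs: "set xs = F" "distinct xs" "sorted_wrt (\<lambda>x y. (x, y) \<in> R) xs"
    using insert.IH by blast
  define ys where "ys = filter (\<lambda>y. (y, x) \<in> R) xs @ [x] @ filter (\<lambda>y. (x, y) \<in> R) xs"
  have cov: "y \<in> F \<Longrightarrow> (y, x) \<in> R \<or> (x, y) \<in> R" for y
    using tot insert.hyps(2) unfolding total_on_def by (metis insertCI)
  have nb: "\<not> ((y, x) \<in> R \<and> (x, y) \<in> R)" for y
    using tr irr unfolding trans_def irrefl_def by blast
  have "set ys = insert x F" unfolding ys_def using xs(1) cov by auto
  moreover have "distinct ys" unfolding ys_def using xs(2) nb insert.hyps(2) xs(1) by auto
  moreover have "sorted_wrt (\<lambda>x y. (x, y) \<in> R) ys" unfolding ys_def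
    using xs(3) tr irr by (auto simp: sorted_wrt_append sorted_wrt_filter dest: transD)
  ultimately show ?case by blast
qed

fun dep :: "nat \<Rightarrow> nat" where
  "dep v = (if v \<le> 1 then 0 else Suc (dep (v div 2)))"
declare dep.simps[simp del]

lemma dep_bounds: "1 \<le> v \<Longrightarrow> 2 ^ dep v \<le> v \<and> v < 2 ^ Suc (dep v)"
proof (induction v rule: dep.induct)
  case (1 v)
  show ?case
  proof (cases "v \<le> 1")
    case True then show ?thesis using "1.prems" by (simp add: dep.simps)
  next
    case False
    then have IH: "2 ^ dep (v div 2) \<le> v div 2 \<and> v div 2 < 2 ^ Suc (dep (v div 2))"
      using "1.IH" by simp
    have "dep v = Suc (dep (v div 2))" using False by (simp add: dep.simps)
    then show ?thesis using IH by auto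
  qed
qed

lemma dep_1: "dep 1 = 0" "dep (Suc 0) = 0" by (subst dep.simps, simp)+

lemma dep_2v: "1 \<le> v \<Longrightarrow> dep (2 * v) = Suc (dep v)"
  by (subst dep.simps) simp
lemma dep_2v1: "1 \<le> v \<Longrightarrow> dep (2 * v + 1) = Suc (dep v)"
  by (subst dep.simps) simp

lemma dep_less: "1 \<le> v \<Longrightarrow> v < 2 ^ n \<longleftrightarrow> dep v < n"
proof
  assume "1 \<le> v" "v < 2 ^ n"
  then have "2 ^ dep v < (2::nat) ^ n" using dep_bounds by (meson le_less_trans)
  then show "dep v < n" by simp
next
  assume "1 \<le> v" "dep v < n"
  then have "v < 2 ^ Suc (dep v)" using dep_bounds by blast
  also have "\<dots> \<le> 2 ^ n" using \<open>dep v < n\<close> by (intro power_increasing) auto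
  finally show "v < 2 ^ n" .
qed

lemma heap_induct[consumes 1, case_names 1 2 3]:
  fixes P :: "nat \<Rightarrow> bool" and v :: nat
  assumes v1: "1 \<le> v" and "P 1" "\<And>v. 1 \<le> v \<Longrightarrow> P v \<Longrightarrow> P (2 * v)" "\<And>v. 1 \<le> v \<Longrightarrow> P v \<Longrightarrow> P (2 * v + 1)"
  shows "P v"
  using v1
proof (induction v rule: less_induct)
  case (less v)
  show ?case
  proof (cases "v = 1")
    case True then show ?thesis using assms(2) by simp
  next
    case False
    then have "1 \<le> v div 2" "v div 2 < v" using less.prems by auto
    then have "P (v div 2)" using less.IH by blast
    then show ?thesis
      using assms(3)[OF \<open>1 \<le> v div 2\<close>] assms(4)[OF \<open>1 \<le> v div 2\<close>]
      by (metis div_mult_mod_eq mod2_eq_if mult.commute add_0_right)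
  qed
qed


function psi :: "('i \<times> 'i) set \<Rightarrow> 'i set \<Rightarrow> 'i list \<Rightarrow> 'i tensor \<Rightarrow> nat \<Rightarrow> 'i tensor" where
  "psi R I xs \<phi> v = (if v \<le> 1 then nf R I \<phi>
     else nf R I (restr (psi R I xs \<phi> (v div 2)) (xs ! dep (v div 2)) (odd v)))"
  by auto
termination by (relation "measure (\<lambda>(R, I, xs, \<phi>, v). v)") auto
declare psi.simps[simp del]

lemma psi_1: "psi R I xs \<phi> 1 = nf R I \<phi>" "psi R I xs \<phi> (Suc 0) = nf R I \<phi>"
  by (subst psi.simps, simp)+
lemma psi_2v: "1 \<le> v \<Longrightarrow> psi R I xs \<phi> (2 * v) = nf R I (restr (psi R I xs \<phi> v) (xs ! dep v) False)"
  by (subst psi.simps) simp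
lemma psi_2v1: "1 \<le> v \<Longrightarrow> psi R I xs \<phi> (2 * v + 1) = nf R I (restr (psi R I xs \<phi> v) (xs ! dep v) True)"
  by (subst psi.simps) simp
lemma psi_nf: "\<exists>\<chi>. psi R I xs \<phi> v = nf R I \<chi>"
  by (subst psi.simps) auto

lemma set_drop_Suc:
  assumes "distinct xs" "k < length xs"
  shows "set (drop (Suc k) xs) = set (drop k xs) - {xs ! k}"
proof -
  have d: "drop k xs = xs ! k # drop (Suc k) xs" using assms(2) by (rule Cons_nth_drop_Suc[symmetric])
  have "distinct (drop k xs)" using assms(1) by simp
  then have "xs ! k \<notin> set (drop (Suc k) xs)" using d by (metis distinct.simps(2))
  moreover have "set (drop k xs) = insert (xs ! k) (set (drop (Suc k) xs))" using d by (metis list.simps(15))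
  ultimately show ?thesis by auto
qed

lemma psi_over:
  assumes tov: "tensor_over (set xs) \<phi>" and dist: "distinct xs"
  shows "1 \<le> v \<Longrightarrow> dep v \<le> length xs \<longrightarrow> tensor_over (set (drop (dep v) xs)) (psi R I xs \<phi> v)"
proof (induction v rule: heap_induct)
  case 1
  then show ?case using tov by (simp add: psi_1 dep_1 tensor_over_nf)
next
  case (2 v)
  show ?case
  proof
    assume "dep (2 * v) \<le> length xs"
    then have lt: "dep v < length xs" using dep_2v[OF 2(1)] by simp
    then have "tensor_over (set (drop (dep v) xs)) (psi R I xs \<phi> v)" using 2 by simp
    then have "tensor_over (set (drop (dep v) xs) - {xs ! dep v}) (restr (psi R I xs \<phi> v) (xs ! dep v) False)"
      by (rule tensor_over_restr)
    then show "tensor_over (set (drop (dep (2 * v)) xs)) (psi R I xs \<phi> (2 * v))"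
      using set_drop_Suc[OF dist lt] by (simp add: dep_2v[OF 2(1)] psi_2v[OF 2(1)] tensor_over_nf)
  qed
next
  case (3 v)
  show ?case
  proof
    assume "dep (2 * v + 1) \<le> length xs"
    then have lt: "dep v < length xs" using dep_2v1[OF 3(1)] by simp
    then have "tensor_over (set (drop (dep v) xs)) (psi R I xs \<phi> v)" using 3 by simp
    then have "tensor_over (set (drop (dep v) xs) - {xs ! dep v}) (restr (psi R I xs \<phi> v) (xs ! dep v) True)"
      by (rule tensor_over_restr)
    then show "tensor_over (set (drop (dep (2 * v + 1)) xs)) (psi R I xs \<phi> (2 * v + 1))"
      using set_drop_Suc[OF dist lt] unfolding dep_2v1[OF 3(1)] psi_2v1[OF 3(1)] by (simp add: tensor_over_nf)
  qed
qed

lemma ntr_unique: "node_tensor_rel F v t \<Longrightarrow> node_tensor_rel F v t' \<Longrightarrow> t = t'"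
proof (induction arbitrary: t' rule: node_tensor_rel.induct)
  case (term_node v)
  from term_node.prems show ?case
  proof (cases rule: node_tensor_rel.cases)
    case term_node then show ?thesis by simp
  next
    case (nonterm_node u0 u1) then show ?thesis using \<open>v \<notin> nonterm F\<close> by simp
  qed
next
  case (nonterm_node v t0 t1)
  note IH = nonterm_node.IH and hv = nonterm_node.hyps(1)
  from nonterm_node.prems show ?case
  proof (cases rule: node_tensor_rel.cases)
    case term_node then show ?thesis using hv by simp
  next
    case (nonterm_node u0 u1)
    have "t0 = u0" using IH(1) nonterm_node(3) by blast
    moreover have "t1 = u1" using IH(2) nonterm_node(4) by blast
    ultimately show ?thesis using nonterm_node(1) by simp
  qed
qed

lemma node_tensor_eq:
  assumes h: "node_tensor_rel F v t" shows "node_tensor F v = t"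
  unfolding node_tensor_def
proof (rule the_equality)
  show "node_tensor_rel F v t" by (rule h)
next
  fix t' assume "node_tensor_rel F v t'"
  then show "t' = t" by (rule ntr_unique[OF _ h])
qed


definition mkF :: "('i \<times> 'i) set \<Rightarrow> 'i set \<Rightarrow> 'i list \<Rightarrow> 'i tensor \<Rightarrow> (nat, 'i) tdd" where
  "mkF R I xs \<phi> = \<lparr>nodes = {1..<2 ^ Suc (length xs)}, nonterm = {1..<2 ^ length xs}, root = 1,
     idx = (\<lambda>v. xs ! dep v), val = (\<lambda>v. psi R I xs \<phi> v (\<lambda>_. False)),
     lo = (\<lambda>v. 2 * v), hi = (\<lambda>v. 2 * v + 1),
     wlo = (\<lambda>v. scl R I (restr (psi R I xs \<phi> v) (xs ! dep v) False)),
     whi = (\<lambda>v. scl R I (restr (psi R I xs \<phi> v) (xs ! dep v) True)),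
     wroot = scl R I \<phi>\<rparr>"

theorem theorem2:
  fixes I :: "'i set" and R :: "('i \<times> 'i) set" and \<phi> :: "'i tensor"
  assumes "finite I"
    and "strict_linear_order_on I R"
    and "tensor_over I \<phi>"
  shows "\<exists>F :: (nat, 'i) tdd. is_tdd I F \<and> tdd_ordered R F \<and> tdd_normal R I F
           \<and> tdd_tensor F = \<phi>"
proof -
  note fin = assms(1) and slo = assms(2) and tovI = assms(3)
  obtain xs where xs: "set xs = I" "distinct xs" "sorted_wrt (\<lambda>x y. (x, y) \<in> R) xs"
    using sorted_list_exists[OF fin slo] by blast
  define n where "n = length xs"
  define F where "F = mkF R I xs \<phi>"
  define ps where "ps = psi R I xs \<phi>"
  have F_simps: "nodes F = {1..<2 ^ Suc n}" "nonterm F = {1..<2 ^ n}" "root F = 1"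
    "idx F = (\<lambda>v. xs ! dep v)" "val F = (\<lambda>v. ps v (\<lambda>_. False))"
    "lo F = (\<lambda>v. 2 * v)" "hi F = (\<lambda>v. 2 * v + 1)"
    "wlo F = (\<lambda>v. scl R I (restr (ps v) (xs ! dep v) False))"
    "whi F = (\<lambda>v. scl R I (restr (ps v) (xs ! dep v) True))"
    "wroot F = scl R I \<phi>"
    unfolding F_def mkF_def n_def ps_def by simp_all
  have over: "tensor_over (set (drop (dep v) xs)) (ps v)" if "1 \<le> v" "dep v \<le> n" for v
    using psi_over[OF _ xs(2) that(1)] tovI xs(1) that(2) unfolding ps_def n_def by simp
  have overI: "tensor_over I (ps v)" if "1 \<le> v" "dep v \<le> n" for v
  proof (rule tensor_over_mono[OF _ over[OF that]])
    show "set (drop (dep v) xs) \<subseteq> I" using xs(1) set_drop_subset by metis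
  qed
  have rel: "1 \<le> v \<longrightarrow> v < 2 ^ Suc n \<longrightarrow> node_tensor_rel F v (ps v)" for v
  proof (induction v rule: measure_induct_rule[of "\<lambda>v. 2 ^ Suc n - v"])
    case (less v)
    show ?case
    proof (intro impI)
      assume v1: "1 \<le> v" and vN: "v < 2 ^ Suc n"
      show "node_tensor_rel F v (ps v)"
      proof (cases "v < 2 ^ n")
        case True
        have vnt: "v \<in> nonterm F" using True v1 F_simps by simp
        have c: "2 * v < 2 ^ Suc n" "2 * v + 1 < 2 ^ Suc n" using True by auto
        have r0: "node_tensor_rel F (lo F v) (ps (2 * v))"
          using less[of "2 * v"] c v1 F_simps by simp
        have r1: "node_tensor_rel F (hi F v) (ps (2 * v + 1))"
          using less[of "2 * v + 1"] c v1 F_simps by simp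
        have dv: "dep v \<le> n" using dep_less[OF v1] True by simp
        define x where "x = xs ! dep v"
        have ovr: "tensor_over I (restr (ps v) x b)" for b
          by (rule tensor_over_mono[OF _ tensor_over_restr[OF overI[OF v1 dv], of x b]]) auto
        have eq: "(\<lambda>a. (if a (idx F v) then 0 else 1) * wlo F v * ps (2 * v) a
                     + (if a (idx F v) then 1 else 0) * whi F v * ps (2 * v + 1) a) = ps v"
        proof
          fix a
          have e0: "ps (2 * v) = nf R I (restr (ps v) x False)"
            unfolding ps_def x_def by (rule psi_2v[OF v1])
          have e1: "ps (2 * v + 1) = nf R I (restr (ps v) x True)"
            unfolding ps_def x_def by (rule psi_2v1[OF v1])
          have d0: "scl R I (restr (ps v) x False) * nf R I (restr (ps v) x False) a = ps v (a(x := False))"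
            using nf_decomp[OF fin slo ovr] unfolding restr_def by simp
          have d1: "scl R I (restr (ps v) x True) * nf R I (restr (ps v) x True) a = ps v (a(x := True))"
            using nf_decomp[OF fin slo ovr] unfolding restr_def by simp
          show "(if a (idx F v) then 0 else 1) * wlo F v * ps (2 * v) a
                     + (if a (idx F v) then 1 else 0) * whi F v * ps (2 * v + 1) a = ps v a"
            unfolding F_simps e0 e1 x_def[symmetric]
            using d0 d1 by (cases "a x") (auto simp: fun_upd_idem)
        qed
        show ?thesis using node_tensor_rel.nonterm_node[OF vnt r0 r1] unfolding eq .
      next
        case False
        have vnt: "v \<notin> nonterm F" using False F_simps by simp
        have vn: "v \<in> nodes F" using v1 vN F_simps by simp
        have "dep v < Suc n" using dep_less[OF v1, of "Suc n"] vN by blast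
        moreover have "\<not> dep v < n" using dep_less[OF v1] False by simp
        ultimately have dv: "dep v = n" by simp
        have "tensor_over {} (ps v)" using over[OF v1] dv unfolding n_def by simp
        then have "ps v = (\<lambda>_. val F v)" unfolding tensor_over_def F_simps by auto
        then show ?thesis using node_tensor_rel.term_node[OF vn vnt] by simp
      qed
    qed
  qed
  have nt: "node_tensor F v = ps v" if "v \<in> nodes F" for v
    using rel[of v] that F_simps by (auto intro: node_tensor_eq)
  have "is_tdd I F"
  proof -
    have "(1::nat) < 2 ^ Suc n" by (rule one_less_power) auto
    then have "finite (nodes F)" "nonterm F \<subseteq> nodes F" "root F \<in> nodes F" using F_simps by auto
    moreover have "\<forall>v\<in>nonterm F. idx F v \<in> I \<and> lo F v \<in> nodes F \<and> hi F v \<in> nodes F"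
    proof
      fix v assume "v \<in> nonterm F"
      then have v: "1 \<le> v" "v < 2 ^ n" using F_simps by auto
      then have "dep v < length xs" using dep_less unfolding n_def by blast
      then have "xs ! dep v \<in> I" using xs(1) by auto
      then show "idx F v \<in> I \<and> lo F v \<in> nodes F \<and> hi F v \<in> nodes F" using v F_simps by auto
    qed
    moreover have E: "tdd_edges F \<subseteq> less_than"
      unfolding tdd_edges_def F_simps by auto
    then have "acyclic (tdd_edges F)" using wf_acyclic[OF wf_less_than] acyclic_subset by blast
    moreover have "\<forall>v\<in>nodes F. (root F, v) \<in> (tdd_edges F)\<^sup>*"
    proof -
      have "v < 2 ^ Suc n \<longrightarrow> (1, v) \<in> (tdd_edges F)\<^sup>*" if "1 \<le> v" for v
        using that
      proof (induction v rule: heap_induct)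
        case 1 then show ?case by simp
      next
        case (2 v)
        show ?case
        proof
          assume "2 * v < 2 ^ Suc n"
          then have "v < 2 ^ n" by simp
          then have "(v, 2 * v) \<in> tdd_edges F" unfolding tdd_edges_def F_simps using 2(1) by auto
          moreover have "v < 2 ^ Suc n" using \<open>v < 2 ^ n\<close> by simp
          ultimately show "(1, 2 * v) \<in> (tdd_edges F)\<^sup>*" using 2(2) by (meson rtrancl_into_rtrancl)
        qed
      next
        case (3 v)
        show ?case
        proof
          assume "2 * v + 1 < 2 ^ Suc n"
          then have "v < 2 ^ n" by simp
          then have "(v, 2 * v + 1) \<in> tdd_edges F" unfolding tdd_edges_def F_simps using 3(1) by auto
          moreover have "v < 2 ^ Suc n" using \<open>v < 2 ^ n\<close> by simp
          ultimately show "(1, 2 * v + 1) \<in> (tdd_edges F)\<^sup>*" using 3(2) by (meson rtrancl_into_rtrancl)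
        qed
      qed
      then show ?thesis using F_simps by auto
    qed
    ultimately show ?thesis unfolding is_tdd_def by blast
  qed
  moreover have "tdd_ordered R F"
    unfolding tdd_ordered_def
  proof
    fix v assume "v \<in> nonterm F"
    then have v: "1 \<le> v" "v < 2 ^ n" using F_simps by auto
    have o: "(xs ! dep v, xs ! Suc (dep v)) \<in> R" if "Suc (dep v) < n"
      using sorted_wrt_nth_less[OF xs(3), of "dep v" "Suc (dep v)"] that unfolding n_def by simp
    have a: "2 * v \<in> nonterm F \<Longrightarrow> Suc (dep v) < n"
      using dep_less[of "2 * v" n] dep_2v[OF v(1)] v(1) F_simps by auto
    have b: "2 * v + 1 \<in> nonterm F \<Longrightarrow> Suc (dep v) < n"
      using dep_less[of "2 * v + 1" n] dep_2v1[OF v(1)] v(1) F_simps by auto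
    show "(lo F v \<in> nonterm F \<longrightarrow> (idx F v, idx F (lo F v)) \<in> R) \<and>
          (hi F v \<in> nonterm F \<longrightarrow> (idx F v, idx F (hi F v)) \<in> R)"
      using a b o unfolding F_simps dep_2v[OF v(1)] dep_2v1[OF v(1)] by simp
  qed
  moreover have "tdd_normal R I F"
    unfolding tdd_normal_def
  proof
    fix v assume "v \<in> nodes F"
    then have "node_tensor F v = ps v" by (rule nt)
    moreover obtain \<chi> where "ps v = nf R I \<chi>" unfolding ps_def using psi_nf by blast
    ultimately show "normal_tensor R I (node_tensor F v)" using nf_normal[OF fin slo] by simp
  qed
  moreover have "tdd_tensor F = \<phi>"
  proof
    fix a
    have "node_tensor F (root F) = nf R I \<phi>"
      using nt[of 1] F_simps one_less_power[of "2::nat" "Suc n"] unfolding ps_def by (simp add: psi_1)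
    then show "tdd_tensor F a = \<phi> a"
      unfolding tdd_tensor_def using nf_decomp[OF fin slo tovI] F_simps by simp
  qed
  ultimately show ?thesis by blast
qed

end
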